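(* Let $X$ and $Y$ be Tychonoff spaces. If the free topological groups $F(X)$ and $F(Y)$ are topologically isomorphic, or if the free Abelian topological groups $A(X)$ and $A(Y)$ are topologically isomorphic, then $X$ is totally disconnected if and only if $Y$ is totally disconnected.
   Context: $F(X)$ is Markov's free topological group of $X$: a topological group containing $X$ as a generating subspace such that every continuous map from $X$ to a topological group extends uniquely to a continuous homomorphism from $F(X)$. $A(X)$ is Markov's free Abelian topological group, defined analogously with Abelian topological groups. A space is totally disconnected if any two distinct points are separated by a clopen set. *)

theory Defs
  imports "HOL-Analysis.Analysis" "HOL-Algebra.Generated_Groups"
begin

definition Tychonoff_space :: "'a topology \<Rightarrow> bool" where
  "Tychonoff_space X \<longleftrightarrow> completely_regular_space X \<and> Hausdorff_space X"

definition totally_disconnected_space :: "'a topology \<Rightarrow> bool" where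
  "totally_disconnected_space X \<longleftrightarrow>
     (\<forall>x\<in>topspace X. \<forall>y\<in>topspace X. x \<noteq> y \<longrightarrow>
        (\<exists>U. openin X U \<and> closedin X U \<and> x \<in> U \<and> y \<notin> U))"

definition topological_group :: "'g monoid \<Rightarrow> 'g topology \<Rightarrow> bool" where
  "topological_group G T \<longleftrightarrow> group G \<and> topspace T = carrier G \<and>
     continuous_map (prod_topology T T) T (\<lambda>(x, y). x \<otimes>\<^bsub>G\<^esub> y) \<and>
     continuous_map T T (\<lambda>x. inv\<^bsub>G\<^esub> x)"

text \<open>The test groups H range over topological groups whose carrier has
  the same type as G; this is no restriction.\<close>
definition free_topological_group ::
    "'x topology \<Rightarrow> 'g monoid \<Rightarrow> 'g topology \<Rightarrow> ('x \<Rightarrow> 'g) \<Rightarrow> bool" where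
  "free_topological_group X G T i \<longleftrightarrow>
     topological_group G T \<and> embedding_map X T i \<and>
     generate G (i ` topspace X) = carrier G \<and>
     (\<forall>(H :: 'g monoid) TH f. topological_group H TH \<and> continuous_map X TH f \<longrightarrow>
        (\<exists>!h. h \<in> extensional (carrier G) \<and> h \<in> hom G H \<and> continuous_map T TH h \<and>
              (\<forall>x\<in>topspace X. h (i x) = f x)))"

definition free_abelian_topological_group ::
    "'x topology \<Rightarrow> 'g monoid \<Rightarrow> 'g topology \<Rightarrow> ('x \<Rightarrow> 'g) \<Rightarrow> bool" where
  "free_abelian_topological_group X G T i \<longleftrightarrow>
     topological_group G T \<and> comm_group G \<and> embedding_map X T i \<and>
     generate G (i ` topspace X) = carrier G \<and>
     (\<forall>(H :: 'g monoid) TH f. topological_group H TH \<and> comm_group H \<and>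
        continuous_map X TH f \<longrightarrow>
        (\<exists>!h. h \<in> extensional (carrier G) \<and> h \<in> hom G H \<and> continuous_map T TH h \<and>
              (\<forall>x\<in>topspace X. h (i x) = f x)))"

definition top_group_isomorphic ::
    "'g monoid \<Rightarrow> 'g topology \<Rightarrow> 'h monoid \<Rightarrow> 'h topology \<Rightarrow> bool" where
  "top_group_isomorphic G T H TH \<longleftrightarrow>
     (\<exists>h. h \<in> iso G H \<and> homeomorphic_map T TH h)"

end

theory Submission
  imports Defs
begin

lemma emb_cont_inj:
  assumes "embedding_map X T i"
  shows "continuous_map X T i" "inj_on i (topspace X)"
  using assms unfolding embedding_map_def
  by (auto dest: homeomorphic_imp_continuous_map homeomorphic_imp_injective_map
      simp: continuous_map_in_subtopology)

lemma td_pullback: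
  assumes "totally_disconnected_space S" "continuous_map R S j" "inj_on j (topspace R)"
  shows "totally_disconnected_space R"
  unfolding totally_disconnected_space_def
proof (intro ballI impI)
  fix x y assume xy: "x \<in> topspace R" "y \<in> topspace R" "x \<noteq> y"
  then have "j x \<noteq> j y" "j x \<in> topspace S" "j y \<in> topspace S"
    using assms(2,3) by (auto simp: inj_on_def continuous_map_def)
  then obtain U where U: "openin S U" "closedin S U" "j x \<in> U" "j y \<notin> U"
    using assms(1) unfolding totally_disconnected_space_def by blast
  show "\<exists>U. openin R U \<and> closedin R U \<and> x \<in> U \<and> y \<notin> U"
    apply (rule exI[of _ "{z \<in> topspace R. j z \<in> U}"])
    using U xy assms(2) by (auto intro: openin_continuous_map_preimage closedin_continuous_map_preimage)
qed

lemma td_homeo: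
  assumes "homeomorphic_map T TH h"
  shows "totally_disconnected_space T \<longleftrightarrow> totally_disconnected_space TH"
proof -
  obtain g where g: "homeomorphic_maps T TH h g" using assms homeomorphic_map_maps by blast
  then have "continuous_map T TH h" "continuous_map TH T g"
    "\<forall>x\<in>topspace T. g (h x) = x" "\<forall>y\<in>topspace TH. h (g y) = y"
    by (auto simp: homeomorphic_maps_def)
  then show ?thesis
    using td_pullback[of TH T h] td_pullback[of T TH g] inj_on_inverseI[of "topspace T" g h] inj_on_inverseI[of "topspace TH" h g] by blast
qed

lemma discrete_topgroup:
  assumes "group G"
  shows "topological_group G (discrete_topology (carrier G))"
  unfolding topological_group_def
  using assms
  by (auto simp flip: prod_topology_discrete_topology intro: monoid.m_closed[OF group.is_monoid] group.inv_closed)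

lemma if_cont_discrete:
  assumes "openin X C" "closedin X C"
    "continuous_map X (discrete_topology D) f" "continuous_map X (discrete_topology D) g"
  shows "continuous_map X (discrete_topology D) (\<lambda>z. if z \<in> C then f z else g z)"
proof -
  have o: "openin X (topspace X - C)" using assms(2) by (simp add: closedin_def)
  show ?thesis
    unfolding continuous_map_def
  proof (intro conjI allI impI)
    show "(\<lambda>z. if z \<in> C then f z else g z) \<in> topspace X \<rightarrow> topspace (discrete_topology D)"
      using assms(3,4) by (auto simp: continuous_map_def)
  next
    fix V assume "openin (discrete_topology D) V"
    then have a: "openin X {x \<in> topspace X. f x \<in> V}" "openin X {x \<in> topspace X. g x \<in> V}"
      using assms(3,4) by (auto simp: continuous_map_def)
    have "{x \<in> topspace X. (if x \<in> C then f x else g x) \<in> V} =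
       (C \<inter> {x \<in> topspace X. f x \<in> V}) \<union> ((topspace X - C) \<inter> {x \<in> topspace X. g x \<in> V})"
      by auto
    then show "openin X {x \<in> topspace X. (if x \<in> C then f x else g x) \<in> V}"
      using a o assms(1) by (simp add: openin_Un openin_Int)
  qed
qed

lemma clopen_sep_finite:
  assumes "totally_disconnected_space X" "finite F" "F \<subseteq> topspace X" "a \<in> topspace X" "a \<notin> F"
  shows "\<exists>C. openin X C \<and> closedin X C \<and> a \<in> C \<and> C \<inter> F = {}"
  using assms(2,3,5)
proof (induction F rule: finite_induct)
  case empty
  then show ?case using assms(4) by (intro exI[of _ "topspace X"]) auto
next
  case (insert b F)
  then obtain C where C: "openin X C" "closedin X C" "a \<in> C" "C \<inter> F = {}" by auto
  obtain U where U: "openin X U" "closedin X U" "a \<in> U" "b \<notin> U"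
  proof -
    have "a \<noteq> b" "b \<in> topspace X" using insert.prems by auto
    then show ?thesis using assms(1,4) that unfolding totally_disconnected_space_def by blast
  qed
  show ?case using C U by (intro exI[of _ "C \<inter> U"]) auto
qed

lemma locconst_ext:
  assumes "totally_disconnected_space X" "finite F" "F \<subseteq> topspace X"
    "v ` topspace X \<subseteq> D" "d \<in> D"
  shows "\<exists>f. continuous_map X (discrete_topology D) f \<and> (\<forall>x\<in>F. f x = v x)"
  using assms(2,3)
proof (induction F rule: finite_induct)
  case empty
  then show ?case using assms(5) by (intro exI[of _ "\<lambda>_. d"]) auto
next
  case (insert a F)
  then obtain f where f: "continuous_map X (discrete_topology D) f" "\<forall>x\<in>F. f x = v x" by auto
  obtain C where C: "openin X C" "closedin X C" "a \<in> C" "C \<inter> F = {}"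
    using clopen_sep_finite[OF assms(1) insert(1)] insert.hyps(2) insert.prems by blast
  have "continuous_map X (discrete_topology D) (\<lambda>_. v a)"
    using insert.prems assms(4) by auto
  then have "continuous_map X (discrete_topology D) (\<lambda>z. if z \<in> C then v a else f z)"
    using if_cont_discrete[OF C(1,2) _ f(1)] by blast
  moreover have "\<forall>x\<in>insert a F. (if x \<in> C then v a else f x) = v x"
    using C f(2) by auto
  ultimately show ?case by blast
qed

lemma generate_mono_aux:
  assumes "K \<subseteq> H" "h \<in> generate G K" shows "h \<in> generate G H"
  using assms(2)
proof (induction rule: generate.induct)
  case one show ?case by (rule generate.one)
next
  case (incl h) then have "h \<in> H" using assms(1) by blast
  then show ?case by (rule generate.incl)
next
  case (inv h) then have "h \<in> H" using assms(1) by blast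
  then show ?case by (rule generate.inv)
next
  case (eng h1 h2) show ?case by (rule generate.eng[OF eng.IH])
qed

lemma generate_finite:
  assumes "g \<in> generate G S"
  shows "\<exists>F. finite F \<and> F \<subseteq> S \<and> g \<in> generate G F"
  using assms
proof (induction rule: generate.induct)
  case one
  have "\<one>\<^bsub>G\<^esub> \<in> generate G {}" by (rule generate.one)
  then show ?case by blast
next
  case (incl h)
  have "h \<in> generate G {h}" by (rule generate.incl) simp
  then show ?case using incl by blast
next
  case (inv h)
  have "inv\<^bsub>G\<^esub> h \<in> generate G {h}" by (rule generate.inv) simp
  then show ?case using inv by blast
next
  case (eng h1 h2)
  then obtain F1 F2 where F: "finite F1" "F1 \<subseteq> S" "h1 \<in> generate G F1"
     "finite F2" "F2 \<subseteq> S" "h2 \<in> generate G F2" by blast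
  have "h1 \<in> generate G (F1 \<union> F2)"
    by (rule generate_mono_aux[OF _ F(3)]) (rule Un_upper1)
  moreover have "h2 \<in> generate G (F1 \<union> F2)"
    by (rule generate_mono_aux[OF _ F(6)]) (rule Un_upper2)
  ultimately have "h1 \<otimes>\<^bsub>G\<^esub> h2 \<in> generate G (F1 \<union> F2)" by (rule generate.eng)
  moreover have "finite (F1 \<union> F2)" "F1 \<union> F2 \<subseteq> S" using F by auto
  ultimately show ?case by blast
qed

lemma hom_fix_generate:
  assumes "group G" "h \<in> hom G G" "S \<subseteq> carrier G" "\<forall>s\<in>S. h s = s" "g \<in> generate G S"
  shows "h g = g"
  using assms(5)
proof (induction rule: generate.induct)
  case one
  have gh: "group_hom G G h" using assms(1,2) by (simp add: group_hom.intro group_hom_axioms.intro)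
  show ?case by (rule group_hom.hom_one[OF gh])
next
  case (incl x) then show ?case using assms(4) by blast
next
  case (inv x)
  have gh: "group_hom G G h" using assms(1,2) by (simp add: group_hom.intro group_hom_axioms.intro)
  have x: "x \<in> carrier G" using inv.hyps assms(3) by blast
  have "h (inv\<^bsub>G\<^esub> x) = inv\<^bsub>G\<^esub> (h x)" by (rule group_hom.hom_inv[OF gh x])
  also have "h x = x" using inv.hyps assms(4) by blast
  finally show ?case .
next
  case (eng h1 h2)
  have "h1 \<in> carrier G" by (rule group.generate_in_carrier[OF assms(1,3) eng.hyps(1)])
  moreover have "h2 \<in> carrier G" by (rule group.generate_in_carrier[OF assms(1,3) eng.hyps(2)])
  ultimately have "h (h1 \<otimes>\<^bsub>G\<^esub> h2) = h h1 \<otimes>\<^bsub>G\<^esub> h h2" by (rule hom_mult[OF assms(2)])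
  then show ?case using eng.IH by simp
qed

lemma free_td_core:
  assumes G: "group G" "topological_group G T" "embedding_map X T i"
    "generate G (i ` topspace X) = carrier G"
    and univ: "\<And>f. continuous_map X (discrete_topology (carrier G)) f \<Longrightarrow>
        \<exists>h. h \<in> hom G G \<and> continuous_map T (discrete_topology (carrier G)) h \<and>
              (\<forall>x\<in>topspace X. h (i x) = f x)"
    and td: "totally_disconnected_space X"
  shows "totally_disconnected_space T"
  unfolding totally_disconnected_space_def
proof (intro ballI impI)
  fix a b assume ab: "a \<in> topspace T" "b \<in> topspace T" "a \<noteq> b"
  have tT: "topspace T = carrier G" using G(2) by (simp add: topological_group_def)
  have ci: "continuous_map X T i" using G(3) emb_cont_inj by blast
  then have iX: "i ` topspace X \<subseteq> carrier G" using tT continuous_map_image_subset_topspace by metis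
  have aG: "a \<in> generate G (i ` topspace X)" unfolding G(4) using ab(1) tT by (simp only:)
  have bG: "b \<in> generate G (i ` topspace X)" unfolding G(4) using ab(2) tT by (simp only:)
  obtain Fa where Fa: "finite Fa" "Fa \<subseteq> i ` topspace X" "a \<in> generate G Fa"
    using generate_finite[OF aG] by blast
  obtain Fb where Fb: "finite Fb" "Fb \<subseteq> i ` topspace X" "b \<in> generate G Fb"
    using generate_finite[OF bG] by blast
  have fin: "finite (Fa \<union> Fb)" using Fa(1) Fb(1) by blast
  have sub: "Fa \<union> Fb \<subseteq> i ` topspace X" using Fa(2) Fb(2) by blast
  have a2: "a \<in> generate G (Fa \<union> Fb)" by (rule generate_mono_aux[OF _ Fa(3)]) (rule Un_upper1)
  have b2: "b \<in> generate G (Fa \<union> Fb)" by (rule generate_mono_aux[OF _ Fb(3)]) (rule Un_upper2)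
  obtain C where C: "C \<subseteq> topspace X" "finite C" "Fa \<union> Fb = i ` C"
    using finite_subset_image[OF fin sub] by blast
  have F: "finite C" "C \<subseteq> topspace X" "a \<in> generate G (i ` C)" "b \<in> generate G (i ` C)"
    using C(1,2) a2 b2 unfolding C(3) by blast+
  obtain f where f: "continuous_map X (discrete_topology (carrier G)) f" "\<forall>x\<in>C. f x = i x"
    using locconst_ext[OF td F(1,2) iX monoid.one_closed[OF group.is_monoid[OF G(1)]]] by (elim exE conjE)
  obtain h where h: "h \<in> hom G G" "continuous_map T (discrete_topology (carrier G)) h"
     "\<forall>x\<in>topspace X. h (i x) = f x"
    using univ[OF f(1)] by blast
  have fixF: "\<forall>s\<in>i ` C. h s = s"
  proof
    fix s assume "s \<in> i ` C"
    then obtain x where x: "x \<in> C" "s = i x" by (elim imageE)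
    have "h (i x) = f x" using h(3) F(2) x(1) by blast
    also have "f x = i x" using f(2) x(1) by blast
    finally show "h s = s" using x(2) by (simp only:)
  qed
  have iF: "i ` C \<subseteq> carrier G" using iX F(2) by (meson image_mono order_trans)
  have ha: "h a = a" and hb: "h b = b"
    using hom_fix_generate[OF G(1) h(1) iF fixF] F(3,4) by blast+
  let ?U = "{z \<in> topspace T. h z \<in> {a}}"
  have "openin T ?U" by (rule openin_continuous_map_preimage[OF h(2)]) (use ab tT in simp)
  moreover have "closedin T ?U" by (rule closedin_continuous_map_preimage[OF h(2)]) (use ab tT in simp)
  ultimately show "\<exists>U. openin T U \<and> closedin T U \<and> a \<in> U \<and> b \<notin> U"
    using ab ha hb by blast
qed

lemma free_td:
  assumes "free_topological_group X G T i"
  shows "totally_disconnected_space X \<longleftrightarrow> totally_disconnected_space T"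
proof
  have G: "group G" "topological_group G T" "embedding_map X T i"
    "generate G (i ` topspace X) = carrier G"
    using assms by (auto simp: free_topological_group_def topological_group_def)
  assume "totally_disconnected_space X"
  then show "totally_disconnected_space T"
  proof (rule free_td_core[OF G, rotated])
    fix f assume "continuous_map X (discrete_topology (carrier G)) f"
    then show "\<exists>h. h \<in> hom G G \<and> continuous_map T (discrete_topology (carrier G)) h \<and>
              (\<forall>x\<in>topspace X. h (i x) = f x)"
      using assms discrete_topgroup[OF G(1)] unfolding free_topological_group_def by blast
  qed
next
  assume "totally_disconnected_space T"
  moreover have "embedding_map X T i" using assms by (simp add: free_topological_group_def)
  ultimately show "totally_disconnected_space X"
    using td_pullback emb_cont_inj by blast
qed

lemma free_ab_td:
  assumes "free_abelian_topological_group X G T i"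
  shows "totally_disconnected_space X \<longleftrightarrow> totally_disconnected_space T"
proof
  have G: "group G" "topological_group G T" "embedding_map X T i"
    "generate G (i ` topspace X) = carrier G" and cG: "comm_group G"
    using assms by (auto simp: free_abelian_topological_group_def topological_group_def)
  assume "totally_disconnected_space X"
  then show "totally_disconnected_space T"
  proof (rule free_td_core[OF G, rotated])
    fix f assume "continuous_map X (discrete_topology (carrier G)) f"
    then show "\<exists>h. h \<in> hom G G \<and> continuous_map T (discrete_topology (carrier G)) h \<and>
              (\<forall>x\<in>topspace X. h (i x) = f x)"
      using assms discrete_topgroup[OF G(1)] cG unfolding free_abelian_topological_group_def by blast
  qed
next
  assume "totally_disconnected_space T"
  moreover have "embedding_map X T i" using assms by (simp add: free_abelian_topological_group_def)
  ultimately show "totally_disconnected_space X"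
    using td_pullback emb_cont_inj by blast
qed

theorem corollary10p10:
  fixes X :: "'x topology" and Y :: "'y topology"
    and FX :: "'a monoid" and TFX :: "'a topology" and iFX :: "'x \<Rightarrow> 'a"
    and FY :: "'b monoid" and TFY :: "'b topology" and iFY :: "'y \<Rightarrow> 'b"
    and AX :: "'c monoid" and TAX :: "'c topology" and iAX :: "'x \<Rightarrow> 'c"
    and AY :: "'d monoid" and TAY :: "'d topology" and iAY :: "'y \<Rightarrow> 'd"
  assumes "Tychonoff_space X" and "Tychonoff_space Y"
    and "(free_topological_group X FX TFX iFX \<and> free_topological_group Y FY TFY iFY \<and>
          top_group_isomorphic FX TFX FY TFY)
       \<or> (free_abelian_topological_group X AX TAX iAX \<and>
          free_abelian_topological_group Y AY TAY iAY \<and>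
          top_group_isomorphic AX TAX AY TAY)"
  shows "totally_disconnected_space X \<longleftrightarrow> totally_disconnected_space Y"
  using assms(3)
proof
  assume a: "free_topological_group X FX TFX iFX \<and> free_topological_group Y FY TFY iFY \<and>
          top_group_isomorphic FX TFX FY TFY"
  then obtain h where "homeomorphic_map TFX TFY h" by (auto simp: top_group_isomorphic_def)
  then have "totally_disconnected_space TFX \<longleftrightarrow> totally_disconnected_space TFY" by (rule td_homeo)
  then show ?thesis using a free_td[of X FX TFX iFX] free_td[of Y FY TFY iFY] by simp
next
  assume a: "free_abelian_topological_group X AX TAX iAX \<and>
          free_abelian_topological_group Y AY TAY iAY \<and>
          top_group_isomorphic AX TAX AY TAY"
  then obtain h where "homeomorphic_map TAX TAY h" by (auto simp: top_group_isomorphic_def)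
  then have "totally_disconnected_space TAX \<longleftrightarrow> totally_disconnected_space TAY" by (rule td_homeo)
  then show ?thesis using a free_ab_td[of X AX TAX iAX] free_ab_td[of Y AY TAY iAY] by simp
qed

end
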